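(* Let $X$ be a Hausdorff space all of whose finite powers are Lindel\"of. If for every positive integer $k$ the polarized partition relation $\left(\begin{array}{c}\Omega\\ \Omega\end{array}\right)\longrightarrow\left[\begin{array}{c}\Omega\\ \Omega\end{array}\right]^{1,1}_{k/<3}$ holds for $X$, then $X$ has the property $\textsf{Split}(\Omega,\Omega)$.
   Context: $\Omega$: the $\omega$-covers of $X$ (open covers $\mathcal{U}$ with $X\notin\mathcal{U}$ such that each finite subset of $X$ lies in some member). The relation $\left(\begin{array}{c}\Omega\\ \Omega\end{array}\right)\longrightarrow\left[\begin{array}{c}\Omega\\ \Omega\end{array}\right]^{1,1}_{k/<3}$ means: for all $\mathcal{U}_1,\mathcal{U}_2\in\Omega$ and every $f:\mathcal{U}_1\times\mathcal{U}_2\to\{1,\dots,k\}$ there are $\mathcal{B}_1\subseteq\mathcal{U}_1$ and $\mathcal{B}_2\subseteq\mathcal{U}_2$ with $\mathcal{B}_1,\mathcal{B}_2\in\Omega$ such that $f$ takes fewer than $3$ distinct values on $\mathcal{B}_1\times\mathcal{B}_2$. $\textsf{Split}(\Omega,\Omega)$: for every $\omega$-cover $\mathcal{U}$ there are $\omega$-covers $\mathcal{B}_1,\mathcal{B}_2$ with $\mathcal{B}_1\cap\mathcal{B}_2=\emptyset$ and $\mathcal{B}_1\cup\mathcal{B}_2=\mathcal{U}$. *)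

theory Defs
  imports "HOL-Analysis.Analysis"
begin

definition omega_cover :: "'a topology \<Rightarrow> 'a set set \<Rightarrow> bool" where
  "omega_cover X \<U> \<longleftrightarrow>
     (\<forall>U\<in>\<U>. openin X U) \<and> \<Union>\<U> = topspace X \<and> topspace X \<notin> \<U> \<and>
     (\<forall>F. finite F \<and> F \<subseteq> topspace X \<longrightarrow> (\<exists>U\<in>\<U>. F \<subseteq> U))"

definition polarized_Omega_k_lt3 :: "'a topology \<Rightarrow> nat \<Rightarrow> bool" where
  "polarized_Omega_k_lt3 X k \<longleftrightarrow>
     (\<forall>\<U>1 \<U>2 (f :: 'a set \<times> 'a set \<Rightarrow> nat).
        omega_cover X \<U>1 \<and> omega_cover X \<U>2 \<and> f ` (\<U>1 \<times> \<U>2) \<subseteq> {1..k} \<longrightarrow>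
        (\<exists>\<B>1 \<B>2. \<B>1 \<subseteq> \<U>1 \<and> \<B>2 \<subseteq> \<U>2 \<and> omega_cover X \<B>1 \<and> omega_cover X \<B>2 \<and>
                  card (f ` (\<B>1 \<times> \<B>2)) < 3))"

definition Split_Omega_Omega :: "'a topology \<Rightarrow> bool" where
  "Split_Omega_Omega X \<longleftrightarrow>
     (\<forall>\<U>. omega_cover X \<U> \<longrightarrow>
        (\<exists>\<B>1 \<B>2. omega_cover X \<B>1 \<and> omega_cover X \<B>2 \<and>
                  \<B>1 \<inter> \<B>2 = {} \<and> \<B>1 \<union> \<B>2 = \<U>))"

end

theory Submission imports Defs begin
lemma oc_open: "omega_cover X B \<Longrightarrow> U \<in> B \<Longrightarrow> openin X U" unfolding omega_cover_def by simp
lemma oc_union: "omega_cover X B \<Longrightarrow> \<Union>B = topspace X" unfolding omega_cover_def by simp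
lemma oc_notin: "omega_cover X B \<Longrightarrow> topspace X \<notin> B" unfolding omega_cover_def by simp
lemma oc_fin: "omega_cover X B \<Longrightarrow> finite F \<Longrightarrow> F \<subseteq> topspace X \<Longrightarrow> \<exists>U\<in>B. F \<subseteq> U" unfolding omega_cover_def by simp
lemma oc_intro: "(\<And>U. U \<in> B \<Longrightarrow> openin X U) \<Longrightarrow> \<Union>B = topspace X \<Longrightarrow> topspace X \<notin> B \<Longrightarrow>
  (\<And>F. finite F \<Longrightarrow> F \<subseteq> topspace X \<Longrightarrow> \<exists>U\<in>B. F \<subseteq> U) \<Longrightarrow> omega_cover X B"
  unfolding omega_cover_def by simp

lemma omega_remove:
  assumes "omega_cover X B" "c \<in> B"
  shows "omega_cover X (B - {c})"
proof -
  have "c \<subseteq> topspace X" using oc_union[OF assms(1)] assms(2) by blast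
  moreover have "c \<noteq> topspace X" using oc_notin[OF assms(1)] assms(2) by metis
  ultimately obtain y where y: "y \<in> topspace X" "y \<notin> c" by blast
  have fin: "\<exists>U\<in>B - {c}. F \<subseteq> U" if "finite F" "F \<subseteq> topspace X" for F
  proof -
    have "finite (insert y F)" "insert y F \<subseteq> topspace X" using that y by auto
    then obtain U where "U \<in> B" "insert y F \<subseteq> U"
      using oc_fin[OF assms(1)] by blast
    then show ?thesis using y by blast
  qed
  have "\<Union>(B - {c}) = topspace X"
  proof
    show "\<Union>(B - {c}) \<subseteq> topspace X" using oc_union[OF assms(1)] by blast
    show "topspace X \<subseteq> \<Union>(B - {c})"
    proof
      fix x assume "x \<in> topspace X"
      then obtain U where "U \<in> B - {c}" "{x} \<subseteq> U" using fin[of "{x}"] by auto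
      then show "x \<in> \<Union>(B - {c})" by blast
    qed
  qed
  then show ?thesis using fin oc_open[OF assms(1)] oc_notin[OF assms(1)] by (intro oc_intro) auto
qed

lemma omega_between:
  assumes "omega_cover X B" "omega_cover X U" "B \<subseteq> C" "C \<subseteq> U"
  shows "omega_cover X C"
proof (rule oc_intro)
  show "\<Union>C = topspace X"
  proof
    show "\<Union>C \<subseteq> topspace X" using oc_union[OF assms(2)] assms(4) by blast
    show "topspace X \<subseteq> \<Union>C" using oc_union[OF assms(1)] assms(3) by blast
  qed
  show "\<And>V. V\<in>C \<Longrightarrow> openin X V" using oc_open[OF assms(2)] assms(4) by blast
  show "topspace X \<notin> C" using oc_notin[OF assms(2)] assms(4) by blast
  show "\<exists>V\<in>C. F \<subseteq> V" if "finite F" "F \<subseteq> topspace X" for F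
    using oc_fin[OF assms(1) that] assms(3) by blast
qed

theorem theorem9p4:
  fixes X :: "'a topology"
  assumes "Hausdorff_space X"
    and "\<And>n::nat. n \<ge> 1 \<Longrightarrow> Lindelof_space (product_topology (\<lambda>_. X) {..<n})"
    and "\<And>k::nat. k \<ge> 1 \<Longrightarrow> polarized_Omega_k_lt3 X k"
  shows "Split_Omega_Omega X"
  unfolding Split_Omega_Omega_def
proof (intro allI impI)
  fix U assume U: "omega_cover X U"
  obtain r :: "'a set rel" where r: "Well_order r" "Field r = UNIV"
    using well_ordering by (elim exE conjE)
  define f where "f = (\<lambda>(A::'a set, B). if A = B then 2 else if (A, B) \<in> r then 1 else (3::nat))"
  have frange: "f ` (U \<times> U) \<subseteq> {1..3}" unfolding f_def by auto
  have P3: "polarized_Omega_k_lt3 X 3" using assms(3) by simp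
  have "\<exists>B1 B2. B1 \<subseteq> U \<and> B2 \<subseteq> U \<and> omega_cover X B1 \<and> omega_cover X B2 \<and>
                  card (f ` (B1 \<times> B2)) < 3"
    using P3[unfolded polarized_Omega_k_lt3_def, rule_format, of U U f] U frange by blast
  then obtain B1 B2 where B: "B1 \<subseteq> U" "B2 \<subseteq> U" "omega_cover X B1" "omega_cover X B2"
      "card (f ` (B1 \<times> B2)) < 3" by blast
  have small: "a = b" if ab: "a \<in> B1 \<inter> B2" "b \<in> B1 \<inter> B2" for a b
  proof (rule ccontr)
    assume ne: "a \<noteq> b"
    have tot: "(a, b) \<in> r \<or> (b, a) \<in> r"
      using r ne unfolding well_order_on_def linear_order_on_def total_on_def by auto
    have anti: "\<not> ((a, b) \<in> r \<and> (b, a) \<in> r)"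
      using r ne unfolding well_order_on_def linear_order_on_def partial_order_on_def antisym_def
      by blast
    have v: "f (a,a) = 2" "f (a,b) \<in> {1,3}" "f (b,a) \<in> {1,3}" "f (a,b) \<noteq> f (b,a)"
      using tot anti ne unfolding f_def by auto
    have m: "f (a,a) \<in> f ` (B1 \<times> B2)" "f (a,b) \<in> f ` (B1 \<times> B2)" "f (b,a) \<in> f ` (B1 \<times> B2)"
      using ab by auto
    have "{1,2,3} \<subseteq> f ` (B1 \<times> B2)"
      using v m by auto
    moreover have "finite (f ` (B1 \<times> B2))"
    proof (rule finite_subset)
      show "f ` (B1 \<times> B2) \<subseteq> {1..3}" using B(1,2) frange by blast
    qed simp
    ultimately have "card {1,2,3::nat} \<le> card (f ` (B1 \<times> B2))" by (rule card_mono[rotated])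
    then show False using B(5) by simp
  qed
  obtain B1' where B1': "omega_cover X B1'" "B1' \<subseteq> B1" "B1' \<inter> B2 = {}"
  proof (cases "B1 \<inter> B2 = {}")
    case True then show ?thesis using that B by blast
  next
    case False
    then obtain c where c: "c \<in> B1 \<inter> B2" by blast
    then have "B1 \<inter> B2 = {c}" using small by blast
    moreover have "omega_cover X (B1 - {c})" using omega_remove[OF B(3), of c] c by blast
    ultimately show ?thesis using that[of "B1 - {c}"] by blast
  qed
  have "B2 \<subseteq> U - B1'" "U - B1' \<subseteq> U" using B B1' by blast+
  then have "omega_cover X (U - B1')"
    using omega_between[OF B(4) U] by blast
  moreover have "B1' \<inter> (U - B1') = {}" "B1' \<union> (U - B1') = U" using B1' B by blast+
  ultimately show "\<exists>\<B>1 \<B>2. omega_cover X \<B>1 \<and> omega_cover X \<B>2 \<and> \<B>1 \<inter> \<B>2 = {} \<and> \<B>1 \<union> \<B>2 = U"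
    using B1'(1) by blast
qed

end
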